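(* Under the hypotheses of the construction below, if in addition $p>3$, then $\{M^sT^t\mathbf{1}_D\}_{s,t\in\mathbb{Z}/d\mathbb{Z}}$ is an $(a,c_1,c_2)$-projective $2$-design for $\mathbb{F}_{q^2}^d$ with $a=2$, $c_1=2d$ and $c_2=6$. Construction: $p$ prime, $k\ge1$, $r$ a prime power with $p\mid r-1$ and $r^2+r+1\mid p^k+1$; $q=p^k$, $d=r^2+r+1$; $D\subseteq\mathbb{Z}/d\mathbb{Z}$ is the Singer difference set; $\alpha$ is a primitive element of $\mathbb{F}_{q^2}^\times$, $\omega=\alpha^{(q^2-1)/d}$; $(Tf)(x)=f(x-1)$, $(Mf)(x)=\omega^xf(x)$ for $f:\mathbb{Z}/d\mathbb{Z}\to\mathbb{F}_{q^2}$.
   Context: Vectors in $\mathbb{F}_{q^2}^d$ are identified with functions $\mathbb{Z}/d\mathbb{Z}\to\mathbb{F}_{q^2}$; $\mathbf{1}_D$ is the indicator of $D$. The Singer difference set is a cyclic difference set with parameters $(r^2+r+1,r+1,1)$: $|D|=r+1$ and every nonzero element of $\mathbb{Z}/d\mathbb{Z}$ is uniquely $x-y$ with $x,y\in D$. For $a\in\mathbb{F}_{q^2}$, $\overline{a}=a^q$; $A^*$ is conjugate transpose; $\langle x,y\rangle=x^*y$ on $\mathbb{F}_{q^2}^d$ and analogously on $(\mathbb{F}_{q^2}^d)^{\otimes2}$. For a nondegenerate subspace $V$ ($V\cap V^\perp=\{0\}$), $\{y_j\}$ in $V$ is a $c$-tight frame for $V$ if it spans $V$ and $\sum_j\langle y_j,y\rangle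 y_j=cy$ for all $y\in V$. $(\mathbb{F}_{q^2}^d)^{\otimes2}_{\mathrm{sym}}=\{\sum_{i,j}c_{ij}e_i\otimes e_j:c_{ij}=c_{ji}\}$ (nondegenerate for $q$ odd). A family $\{x_k\}$ in $\mathbb{F}_{q^2}^d$ is an $(a,c_1,c_2)$-projective $2$-design if $\langle x_k,x_k\rangle=a$ for all $k$, $\{x_k\}$ is a $c_1$-tight frame for $\mathbb{F}_{q^2}^d$, and $\{x_k\otimes x_k\}$ is a $c_2$-tight frame for $(\mathbb{F}_{q^2}^d)^{\otimes2}_{\mathrm{sym}}$. Integer parameters are read in $\mathbb{F}_q$. *)

theory Defs
  imports "HOL-Computational_Algebra.Primes"
begin

definition cnj :: "nat \<Rightarrow> 'a::field \<Rightarrow> 'a" where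
  "cnj q a = a ^ q"

text \<open>Hermitian form on vectors indexed by a finite coordinate set I
  (vectors vanish outside I): <x,y> = x^* y.\<close>
definition herm :: "nat \<Rightarrow> 'i set \<Rightarrow> ('i \<Rightarrow> 'a::field) \<Rightarrow> ('i \<Rightarrow> 'a) \<Rightarrow> 'a" where
  "herm q I x y = (\<Sum>i\<in>I. cnj q (x i) * y i)"

definition vecs :: "'i set \<Rightarrow> ('i \<Rightarrow> 'a::field) set" where
  "vecs I = {f. \<forall>i. i \<notin> I \<longrightarrow> f i = 0}"

definition tight_frame ::
  "nat \<Rightarrow> 'i set \<Rightarrow> ('i \<Rightarrow> 'a::field) set \<Rightarrow> 'j set \<Rightarrow> ('j \<Rightarrow> 'i \<Rightarrow> 'a) \<Rightarrow> 'a \<Rightarrow> bool" where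
  "tight_frame q I V J y c \<longleftrightarrow>
     (\<forall>j\<in>J. y j \<in> V) \<and>
     (\<forall>v\<in>V. \<exists>co. v = (\<lambda>i. \<Sum>j\<in>J. co j * y j i)) \<and>
     (\<forall>v\<in>V. (\<lambda>i. \<Sum>j\<in>J. herm q I (y j) v * y j i) = (\<lambda>i. c * v i))"

definition sym_tensors :: "nat \<Rightarrow> (nat \<times> nat \<Rightarrow> 'a::field) set" where
  "sym_tensors d = {f \<in> vecs ({..<d} \<times> {..<d}). \<forall>i j. f (i, j) = f (j, i)}"

definition tensor2 :: "(nat \<Rightarrow> 'a::field) \<Rightarrow> (nat \<times> nat \<Rightarrow> 'a)" where
  "tensor2 x = (\<lambda>(i, j). x i * x j)"

definition proj_2design ::
  "nat \<Rightarrow> nat \<Rightarrow> 'j set \<Rightarrow> ('j \<Rightarrow> nat \<Rightarrow> 'a::field) \<Rightarrow> 'a \<Rightarrow> 'a \<Rightarrow> 'a \<Rightarrow> bool" where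
  "proj_2design q d J x a c1 c2 \<longleftrightarrow>
     (\<forall>k\<in>J. herm q {..<d} (x k) (x k) = a) \<and>
     tight_frame q {..<d} (vecs {..<d}) J x c1 \<and>
     tight_frame q ({..<d} \<times> {..<d}) (sym_tensors d) J (\<lambda>k. tensor2 (x k)) c2"

text \<open>Z/dZ represented by {0..<d}; vectors are functions nat => F vanishing off {0..<d}.
  Translation (Tf)(x) = f(x-1), modulation (Mf)(x) = \<omega>^x f(x).\<close>
definition transl :: "nat \<Rightarrow> (nat \<Rightarrow> 'a::field) \<Rightarrow> nat \<Rightarrow> 'a" where
  "transl d f = (\<lambda>x. if x < d then f ((x + d - 1) mod d) else 0)"

definition modul :: "nat \<Rightarrow> 'a::field \<Rightarrow> (nat \<Rightarrow> 'a) \<Rightarrow> nat \<Rightarrow> 'a" where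
  "modul d \<omega> f = (\<lambda>x. if x < d then \<omega> ^ x * f x else 0)"

definition indic :: "nat set \<Rightarrow> nat \<Rightarrow> 'a::field" where
  "indic D x = (if x \<in> D then 1 else 0)"

definition cyclic_diff_set :: "nat \<Rightarrow> nat \<Rightarrow> nat set \<Rightarrow> bool" where
  "cyclic_diff_set v k D \<longleftrightarrow> D \<subseteq> {..<v} \<and> card D = k \<and>
     (\<forall>z\<in>{1..<v}. \<exists>!xy. xy \<in> D \<times> D \<and> (fst xy + v - snd xy) mod v = z)"

definition prime_power :: "nat \<Rightarrow> bool" where
  "prime_power r \<longleftrightarrow> (\<exists>l m. prime (l::nat) \<and> m \<ge> 1 \<and> r = l ^ m)"

end

theory Submission
  imports Defs
begin

lemma of_nat_card_zero: "of_nat (card (UNIV::'a::{comm_ring_1,finite} set)) = (0::'a)"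
proof -
  have inj: "inj (\<lambda>y::'a. y + 1)" by (auto simp: inj_def)
  have im: "range (\<lambda>y::'a. y + 1) = UNIV"
  proof -
    have "z \<in> range (\<lambda>y::'a. y + 1)" for z by (rule image_eqI[of _ _ "z - 1"]) simp_all
    then show ?thesis by blast
  qed
  have r: "(\<Sum>y\<in>range (\<lambda>y::'a. y + 1). y) = (\<Sum>y\<in>UNIV. y + 1)"
    using sum.reindex[OF inj, of "\<lambda>y. y"] by (simp add: comp_def)
  have "(\<Sum>y\<in>UNIV. y) = (\<Sum>y\<in>range (\<lambda>y::'a. y + 1). y)" by (simp only: im)
  also have "\<dots> = (\<Sum>y\<in>UNIV. y + 1)" by (rule r)
  also have "\<dots> = (\<Sum>y\<in>UNIV. y) + of_nat (card (UNIV::'a set))" by (simp add: sum.distrib)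
  finally show ?thesis by simp
qed

lemma pow_card_minus_one:
  fixes x :: "'a::{field,finite}"
  assumes "x \<noteq> 0"
  shows "x ^ (card (UNIV::'a set) - 1) = 1"
proof -
  let ?N = "UNIV - {0::'a}"
  have inj: "inj_on (\<lambda>y. x * y) ?N" using assms by (auto simp: inj_on_def)
  have im: "(\<lambda>y. x * y) ` ?N = ?N"
  proof
    show "(\<lambda>y. x * y) ` ?N \<subseteq> ?N" using assms by auto
    show "?N \<subseteq> (\<lambda>y. x * y) ` ?N"
    proof
      fix z assume "z \<in> ?N"
      then have "z = x * (z / x)" "z / x \<in> ?N" using assms by auto
      then show "z \<in> (\<lambda>y. x * y) ` ?N" by blast
    qed
  qed
  have "prod (\<lambda>y. y) ?N = prod (\<lambda>y. y) ((\<lambda>y. x * y) ` ?N)" by (simp add: im)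
  also have "\<dots> = prod (\<lambda>y. x * y) ?N" by (simp add: prod.reindex[OF inj])
  also have "\<dots> = x ^ card ?N * prod (\<lambda>y. y) ?N" by (simp add: prod.distrib)
  finally have "x ^ card ?N * prod (\<lambda>y. y) ?N = 1 * prod (\<lambda>y. y) ?N" by simp
  moreover have "prod (\<lambda>y. y) ?N \<noteq> 0" by simp
  ultimately have "x ^ card ?N = 1" by simp
  moreover have "card ?N = card (UNIV::'a set) - 1" by (simp add: card_Diff_singleton)
  ultimately show ?thesis by simp
qed

lemma gen_order:
  fixes \<alpha> :: "'a::{field,finite}"
  assumes "\<alpha> \<noteq> 0" "\<forall>x::'a. x \<noteq> 0 \<longrightarrow> (\<exists>n. x = \<alpha> ^ n)" "\<alpha> ^ n = 1"
  shows "(card (UNIV::'a set) - 1) dvd n"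
proof (rule ccontr)
  let ?N = "card (UNIV::'a set) - 1"
  assume nd: "\<not> ?N dvd n"
  define m where "m = n mod ?N"
  have aN: "\<alpha> ^ ?N = 1" using pow_card_minus_one assms(1) by blast
  have "\<alpha> ^ n = \<alpha> ^ (?N * (n div ?N) + m)" by (simp add: m_def)
  also have "\<dots> = (\<alpha> ^ ?N) ^ (n div ?N) * \<alpha> ^ m" by (simp only: power_add power_mult)
  also have "\<dots> = \<alpha> ^ m" by (simp only: aN power_one mult_1_left)
  finally have am: "\<alpha> ^ m = 1" using assms(3) by simp
  have m0: "m > 0"
  proof (rule ccontr)
    assume "\<not> m > 0"
    then have "n mod ?N = 0" by (simp add: m_def)
    then show False using nd mod_0_imp_dvd by blast
  qed
  have "card {0::'a, 1} \<le> card (UNIV::'a set)" by (rule card_mono) auto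
  then have Npos: "?N > 0" by simp
  have mN: "m < ?N" using Npos by (simp add: m_def)
  have "UNIV - {0} \<subseteq> (\<lambda>k. \<alpha> ^ k) ` {..<m}"
  proof
    fix x :: 'a assume "x \<in> UNIV - {0}"
    then obtain k where k: "x = \<alpha> ^ k" using assms(2) by auto
    have "\<alpha> ^ k = \<alpha> ^ (m * (k div m) + k mod m)" by simp
    also have "\<dots> = \<alpha> ^ (k mod m)" by (simp only: power_add power_mult am power_one mult_1_left)
    finally show "x \<in> (\<lambda>k. \<alpha> ^ k) ` {..<m}" using k m0 by auto
  qed
  then have "card (UNIV - {0::'a}) \<le> card ((\<lambda>k. \<alpha> ^ k) ` {..<m})" by (intro card_mono) auto
  also have "\<dots> \<le> m" using card_image_le[of "{..<m}"] by simp
  finally show False using mN by (simp add: card_Diff_singleton)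
qed

definition gg :: "nat \<Rightarrow> nat \<Rightarrow> nat \<Rightarrow> nat" where
  "gg d t i = (i + t * (d - 1)) mod d"

lemma modeq_int: "(u::nat) mod d = v mod d \<longleftrightarrow> int d dvd (int u - int v)"
  by (metis of_nat_eq_iff of_nat_mod mod_eq_dvd_iff)

lemma small_eq: "(u::nat) < d \<Longrightarrow> v < d \<Longrightarrow> int d dvd (int u - int v) \<Longrightarrow> u = v"
  using modeq_int by (metis mod_less)

lemma dvd_comb: "(m::int) dvd A \<Longrightarrow> m dvd B \<Longrightarrow> C = A + B \<Longrightarrow> m dvd C"
  by simp
lemma dvd_comb2: "(m::int) dvd A \<Longrightarrow> m dvd B \<Longrightarrow> C = A - B \<Longrightarrow> m dvd C"
  by simp

lemma g_cong: assumes "d > 0" shows "int d dvd (int (gg d t i) - (int i - int t))"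
proof -
  have e: "int (gg d t i) = (int i + int t * (int d - 1)) mod int d"
    using assms by (simp add: gg_def of_nat_mod of_nat_diff)
  have "int d dvd ((int i + int t * (int d - 1)) mod int d - (int i + int t * (int d - 1)))"
    by (metis mod_mod_trivial mod_eq_dvd_iff)
  moreover have "int d dvd (int t * int d)" by simp
  ultimately show ?thesis
    by (rule dvd_comb) (simp add: e algebra_simps)
qed

lemma g_less: "d > 0 \<Longrightarrow> gg d t i < d" by (simp add: gg_def)

lemma g_inj_i: assumes "d > 0" "i < d" "j < d" "gg d t i = gg d t j" shows "i = j"
proof -
  have "int d dvd (int j - int i)"
    by (rule dvd_comb2[OF g_cong[OF assms(1), of t i] g_cong[OF assms(1), of t j]]) (simp add: assms(4) algebra_simps)
  then show ?thesis using small_eq assms by (metis dvd_minus_iff minus_diff_eq)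
qed

lemma g_inj_t: assumes "d > 0" "t < d" "t' < d" "gg d t a = gg d t' a" shows "t = t'"
proof -
  have "int d dvd (int t - int t')"
    by (rule dvd_comb2[OF g_cong[OF assms(1), of t a] g_cong[OF assms(1), of t' a]]) (simp add: assms(4) algebra_simps)
  then show ?thesis using small_eq assms by blast
qed

lemma g_surj: assumes "d > 0" shows "(\<lambda>t. gg d t a) ` {..<d} = {..<d}"
proof -
  have inj: "inj_on (\<lambda>t. gg d t a) {..<d}" using g_inj_t[OF assms] by (auto simp: inj_on_def)
  have sub: "(\<lambda>t. gg d t a) ` {..<d} \<subseteq> {..<d}" using g_less[OF assms] by auto
  have "card ((\<lambda>t. gg d t a) ` {..<d}) = card {..<d}" using card_image[OF inj] by simp
  then show ?thesis using card_subset_eq[OF _ sub] by simp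
qed

lemma ds_uniq:
  assumes ds: "cyclic_diff_set d k D" and d0: "d > 0"
    and x: "x \<in> D" and y: "y \<in> D" and x': "x' \<in> D" and y': "y' \<in> D" and ne: "x \<noteq> y"
    and dv: "int d dvd ((int x - int y) - (int x' - int y'))"
  shows "x = x' \<and> y = y'"
proof -
  have Dsub: "D \<subseteq> {..<d}" using ds by (simp add: cyclic_diff_set_def)
  have xl: "x < d" "y < d" "x' < d" "y' < d" using Dsub x y x' y' by auto
  define z where "z = (x + d - y) mod d"
  have z1: "z < d" using d0 by (simp add: z_def)
  have z2: "z \<noteq> 0"
  proof
    assume "z = 0"
    then have "(x + d - y) mod d = (d + 0) mod d" by (simp add: z_def)
    then have "int d dvd (int (x + d - y) - int (d + 0))" using modeq_int by blast
    then have "int d dvd (int x - int y)" using xl by (simp add: of_nat_diff)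
    then show False using small_eq xl ne by blast
  qed
  have e2: "(x' + d - y') mod d = z"
  proof -
    have "int d dvd (int (x' + d - y') - int (x + d - y))"
      using dv xl by (simp add: of_nat_diff algebra_simps dvd_diff_commute)
    then show ?thesis using modeq_int z_def by metis
  qed
  from ds z1 z2 have "\<exists>!xy. xy \<in> D \<times> D \<and> (fst xy + d - snd xy) mod d = z"
    by (simp add: cyclic_diff_set_def)
  then have "(x, y) = (x', y')" using x y x' y' e2 z_def by (metis (no_types, lifting) fst_conv snd_conv mem_Sigma_iff)
  then show ?thesis by simp
qed

lemma ds_exists:
  assumes ds: "cyclic_diff_set d k D" and d0: "d > 0" and ab: "a < d" "b < d" "a \<noteq> b"
  shows "\<exists>x\<in>D. \<exists>y\<in>D. int d dvd ((int x - int y) - (int a - int b))"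
proof -
  have Dsub: "D \<subseteq> {..<d}" using ds by (simp add: cyclic_diff_set_def)
  define z where "z = (a + d - b) mod d"
  have z1: "z < d" using d0 by (simp add: z_def)
  have z2: "z \<noteq> 0"
  proof
    assume "z = 0"
    then have "(a + d - b) mod d = (d + 0) mod d" by (simp add: z_def)
    then have "int d dvd (int (a + d - b) - int (d + 0))" using modeq_int by blast
    then have "int d dvd (int a - int b)" using ab by (simp add: of_nat_diff)
    then show False using small_eq ab by blast
  qed
  have "z \<in> {1..<d}" using z1 z2 by simp
  then have "\<exists>!xy. xy \<in> D \<times> D \<and> (fst xy + d - snd xy) mod d = z"
    using ds unfolding cyclic_diff_set_def by blast
  then obtain xy where xy: "xy \<in> D \<times> D" "(fst xy + d - snd xy) mod d = z"
    by blast
  obtain x y where xy2: "xy = (x, y)" by fastforce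
  have xl: "x < d" "y < d" using Dsub xy xy2 by auto
  have "int d dvd (int (x + d - y) - int (a + d - b))"
    using xy xy2 z_def modeq_int by simp
  then have "int d dvd ((int x - int y) - (int a - int b))" using xl ab
    by (simp add: of_nat_diff algebra_simps)
  then show ?thesis using xy xy2 by auto
qed

lemma quad:
  assumes ds: "cyclic_diff_set d k D" and d0: "d > 0"
    and "x1 \<in> D" "x2 \<in> D" "x3 \<in> D" "x4 \<in> D"
    and dv: "int d dvd (int x1 + int x2 - int x3 - int x4)"
  shows "(x1 = x3 \<and> x2 = x4) \<or> (x1 = x4 \<and> x2 = x3)"
proof (cases "x1 = x3")
  case True
  have Dsub: "D \<subseteq> {..<d}" using ds by (simp add: cyclic_diff_set_def)
  have "int d dvd (int x2 - int x4)" using dv True by simp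
  then have "x2 = x4" using small_eq Dsub assms by blast
  then show ?thesis using True by simp
next
  case False
  have "int d dvd ((int x1 - int x3) - (int x4 - int x2))" using dv by (simp add: algebra_simps)
  then have "x1 = x4 \<and> x3 = x2" using ds_uniq[OF ds d0 _ _ _ _ False] assms by blast
  then show ?thesis by simp
qed

lemma quadT:
  assumes ds: "cyclic_diff_set d k D" and d0: "d > 0"
    and "i < d" "j < d" "a < d" "b < d"
    and "gg d t i \<in> D" "gg d t j \<in> D" "gg d t a \<in> D" "gg d t b \<in> D"
    and e: "(i + j) mod d = (a + b) mod d"
  shows "(i = a \<and> j = b) \<or> (i = b \<and> j = a)"
proof -
  have h: "int d dvd (int (i + j) - int (a + b))" using e modeq_int by blast
  have "int d dvd (int (gg d t i) + int (gg d t j) - int (gg d t a) - int (gg d t b))"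
  proof -
    have s1: "int d dvd ((int (gg d t i) - (int i - int t)) + (int (gg d t j) - (int j - int t)))"
      by (rule dvd_add[OF g_cong[OF d0] g_cong[OF d0]])
    have s2: "int d dvd ((int (gg d t a) - (int a - int t)) + (int (gg d t b) - (int b - int t)))"
      by (rule dvd_add[OF g_cong[OF d0] g_cong[OF d0]])
    have "int d dvd (((int (gg d t i) - (int i - int t)) + (int (gg d t j) - (int j - int t)))
       - ((int (gg d t a) - (int a - int t)) + (int (gg d t b) - (int b - int t))) + (int (i + j) - int (a + b)))"
      by (rule dvd_add[OF dvd_diff[OF s1 s2] h])
    then show ?thesis by (simp add: algebra_simps)
  qed
  then have "(gg d t i = gg d t a \<and> gg d t j = gg d t b) \<or> (gg d t i = gg d t b \<and> gg d t j = gg d t a)"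
    using quad[OF ds d0] assms by blast
  then show ?thesis using g_inj_i[OF d0] assms by metis
qed

lemma count1:
  assumes ds: "cyclic_diff_set d k D" and d0: "d > 0" and a: "a < d"
  shows "card {t\<in>{..<d}. gg d t a \<in> D} = card D"
proof -
  have Dsub: "D \<subseteq> {..<d}" using ds by (simp add: cyclic_diff_set_def)
  have inj: "inj_on (\<lambda>t. gg d t a) {t\<in>{..<d}. gg d t a \<in> D}"
    using g_inj_t[OF d0] by (auto simp: inj_on_def)
  have "(\<lambda>t. gg d t a) ` {t\<in>{..<d}. gg d t a \<in> D} = D"
  proof
    show "(\<lambda>t. gg d t a) ` {t\<in>{..<d}. gg d t a \<in> D} \<subseteq> D" by auto
    show "D \<subseteq> (\<lambda>t. gg d t a) ` {t\<in>{..<d}. gg d t a \<in> D}"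
    proof
      fix y assume y: "y \<in> D"
      then have "y \<in> (\<lambda>t. gg d t a) ` {..<d}" using g_surj[OF d0] Dsub by auto
      then show "y \<in> (\<lambda>t. gg d t a) ` {t\<in>{..<d}. gg d t a \<in> D}" using y by auto
    qed
  qed
  then show ?thesis using card_image[OF inj] by simp
qed

lemma count2:
  assumes ds: "cyclic_diff_set d k D" and d0: "d > 0" and ab: "a < d" "b < d" "a \<noteq> b"
  shows "card {t\<in>{..<d}. gg d t a \<in> D \<and> gg d t b \<in> D} = 1"
proof -
  have Dsub: "D \<subseteq> {..<d}" using ds by (simp add: cyclic_diff_set_def)
  obtain x y where xy: "x \<in> D" "y \<in> D" and dxy: "int d dvd ((int x - int y) - (int a - int b))"
    using ds_exists[OF ds d0 ab] by blast
  have "x \<in> (\<lambda>t. gg d t a) ` {..<d}" using g_surj[OF d0] Dsub xy by auto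
  then obtain t0 where t0: "t0 < d" "gg d t0 a = x" by auto
  have "int d dvd (int (gg d t0 b) - int y)"
  proof -
    have "int d dvd ((int (gg d t0 b) - (int b - int t0)) - (int (gg d t0 a) - (int a - int t0)) + ((int x - int y) - (int a - int b)))"
      by (rule dvd_add[OF dvd_diff[OF g_cong[OF d0] g_cong[OF d0]] dxy])
    then show ?thesis using t0 by (simp add: algebra_simps)
  qed
  then have gb: "gg d t0 b = y" using small_eq g_less[OF d0] Dsub xy by blast
  have "{t\<in>{..<d}. gg d t a \<in> D \<and> gg d t b \<in> D} = {t0}"
  proof
    show "{t0} \<subseteq> {t\<in>{..<d}. gg d t a \<in> D \<and> gg d t b \<in> D}" using t0 gb xy by auto
    show "{t\<in>{..<d}. gg d t a \<in> D \<and> gg d t b \<in> D} \<subseteq> {t0}"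
    proof
      fix t assume t: "t \<in> {t\<in>{..<d}. gg d t a \<in> D \<and> gg d t b \<in> D}"
      have ne: "gg d t a \<noteq> gg d t b" using g_inj_i[OF d0] ab by metis
      have "int d dvd ((int (gg d t a) - int (gg d t b)) - (int x - int y))"
      proof -
        have "int d dvd ((int (gg d t a) - (int a - int t)) - (int (gg d t b) - (int b - int t)) - ((int x - int y) - (int a - int b)))"
          by (rule dvd_diff[OF dvd_diff[OF g_cong[OF d0] g_cong[OF d0]] dxy])
        then show ?thesis by (simp add: algebra_simps)
      qed
      then have "gg d t a = x" using ds_uniq[OF ds d0 _ _ xy ne] t by blast
      then have "t = t0" using g_inj_t[OF d0] t t0 by auto
      then show "t \<in> {t0}" by simp
    qed
  qed
  then show ?thesis by simp
qed

definition XX :: "nat \<Rightarrow> 'a::field \<Rightarrow> nat set \<Rightarrow> nat \<Rightarrow> nat \<Rightarrow> nat \<Rightarrow> 'a" where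
  "XX d \<omega> D s t x = (if x < d \<and> gg d t x \<in> D then \<omega> ^ (s * x) else 0)"

lemma transl_app: "transl d g x = (if x < d then g ((x + d - 1) mod d) else 0)"
  by (simp add: transl_def)

lemma transl_iter:
  assumes d0: "d > 0" and f: "f \<in> vecs {..<d}"
  shows "(transl d ^^ t) f x = (if x < d then f (gg d t x) else 0)"
proof (induction t arbitrary: x)
  case 0
  then show ?case using f by (auto simp: gg_def vecs_def)
next
  case (Suc t)
  have "(transl d ^^ Suc t) f x = transl d ((transl d ^^ t) f) x" by simp
  also have "\<dots> = (if x < d then f (gg d (Suc t) x) else 0)"
  proof (cases "x < d")
    case True
    have lt: "(x + d - 1) mod d < d" using d0 by simp
    have "gg d t ((x + d - 1) mod d) = (x + d - 1 + t * (d - 1)) mod d"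
      by (simp add: gg_def mod_add_left_eq)
    also have "x + d - 1 + t * (d - 1) = x + Suc t * (d - 1)" using d0 by simp
    finally have "gg d t ((x + d - 1) mod d) = gg d (Suc t) x" by (simp add: gg_def)
    then have g: "gg d t ((x + d - 1) mod d) = gg d (Suc t) x" .
    have "transl d ((transl d ^^ t) f) x = (transl d ^^ t) f ((x + d - 1) mod d)"
      using True by (simp only: transl_app if_True)
    also have "\<dots> = f (gg d t ((x + d - 1) mod d))" using Suc.IH[of "(x + d - 1) mod d"] lt by simp
    finally show ?thesis using True g by simp
  next
    case False
    then show ?thesis by (simp add: transl_def)
  qed
  finally show ?case .
qed

lemma modul_iter:
  assumes f: "f \<in> vecs {..<d}"
  shows "(modul d \<omega> ^^ s) f x = (if x < d then \<omega> ^ (s * x) * f x else 0)"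
proof (induction s arbitrary: x)
  case 0
  then show ?case using f by (auto simp: vecs_def)
next
  case (Suc s)
  then show ?case by (simp add: modul_def power_add mult.assoc)
qed

lemma vec_eq:
  assumes d0: "d > 0" and Dsub: "D \<subseteq> {..<d}"
  shows "(modul d \<omega> ^^ s) ((transl d ^^ t) (indic D)) = XX d \<omega> D s t"
proof
  fix x
  have iv: "indic D \<in> vecs {..<d}" using Dsub by (auto simp: vecs_def indic_def)
  have tv: "(transl d ^^ t) (indic D) \<in> vecs {..<d}"
    by (simp add: vecs_def transl_iter[OF d0 iv])
  show "(modul d \<omega> ^^ s) ((transl d ^^ t) (indic D)) x = XX d \<omega> D s t x"
  proof -
    have "(modul d \<omega> ^^ s) ((transl d ^^ t) (indic D)) x = (if x < d then \<omega> ^ (s * x) * (transl d ^^ t) (indic D) x else 0)"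
      by (rule modul_iter[OF tv])
    also have "(transl d ^^ t) (indic D) x = (if x < d then indic D (gg d t x) else 0)"
      by (rule transl_iter[OF d0 iv])
    finally have e: "(modul d \<omega> ^^ s) ((transl d ^^ t) (indic D)) x = (if x < d then \<omega> ^ (s * x) * (if x < d then indic D (gg d t x) else 0) else 0)" .
    show ?thesis by (simp only: e) (simp add: XX_def indic_def)
  qed
qed

lemma orth:
  fixes \<omega> :: "'a::field"
  assumes wd: "\<omega> ^ d = 1" and word: "\<forall>m. \<omega> ^ m = 1 \<longrightarrow> d dvd m"
  shows "(\<Sum>s<d. \<omega> ^ (s * m)) = (if d dvd m then of_nat d else 0)"
proof (cases "d dvd m")
  case True
  then obtain k where k: "m = d * k" by blast
  have "\<omega> ^ m = 1" by (simp add: k power_mult wd)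
  then have "\<omega> ^ (s * m) = 1" for s by (simp add: mult.commute[of s] power_mult)
  then show ?thesis using True by simp
next
  case False
  then have ne: "\<omega> ^ m \<noteq> 1" using word by blast
  have "(\<Sum>s<d. \<omega> ^ (s * m)) = (\<Sum>s<d. (\<omega> ^ m) ^ s)" by (simp add: mult.commute[of _ m] power_mult)
  also have "\<dots> = ((\<omega> ^ m) ^ d - 1) / (\<omega> ^ m - 1)" by (rule geometric_sum[OF ne])
  also have "(\<omega> ^ m) ^ d = 1"
  proof -
    have "(\<omega> ^ m) ^ d = \<omega> ^ (m * d)" by (rule power_mult[symmetric])
    also have "\<dots> = (\<omega> ^ d) ^ m" by (simp only: mult.commute[of m d] power_mult)
    finally show ?thesis by (simp add: wd)
  qed
  finally show ?thesis using False by simp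
qed

lemma exp_cong:
  assumes "(d::nat) dvd q + 1"
  shows "d dvd (u * q + v) \<longleftrightarrow> u mod d = v mod d"
proof -
  have h: "u * q + v + u = u * (q + 1) + v" by (simp add: algebra_simps)
  have du: "d dvd u * (q + 1)" using assms by (rule dvd_mult)
  show ?thesis
  proof
    assume a: "d dvd (u * q + v)"
    have "(u * q + v + u) mod d = ((u * q + v) mod d + u) mod d" by (rule mod_add_left_eq[symmetric])
    also have "\<dots> = u mod d" using a by simp
    finally have "(u * q + v + u) mod d = u mod d" .
    moreover have "(u * (q + 1) + v) mod d = ((u * (q + 1)) mod d + v) mod d" by (rule mod_add_left_eq[symmetric])
    then have "(u * (q + 1) + v) mod d = v mod d" using du by simp
    ultimately show "u mod d = v mod d" using h by simp
  next
    assume a: "u mod d = v mod d"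
    have "(u * q + v) mod d = (u * q + u) mod d" using a by (metis mod_add_right_eq)
    also have "u * q + u = u * (q + 1)" by (simp add: algebra_simps)
    finally have c: "(u * q + v) mod d = (u * (q + 1)) mod d" .
    have m0: "(u * (q + 1)) mod d = 0" using du by (rule dvd_imp_mod_0)
    have "(u * q + v) mod d = 0" using c m0 by simp
    then show "d dvd (u * q + v)" by (rule mod_0_imp_dvd)
  qed
qed

lemma cnj_XX: "q > 0 \<Longrightarrow> cnj q (XX d \<omega> D s t i) = (if i < d \<and> gg d t i \<in> D then \<omega> ^ (s * i * q) else 0)"
  by (simp add: cnj_def XX_def power_mult)

lemma sum_if_const: "(\<Sum>s\<in>A. if P then f s else 0) = (if P then sum f A else 0)"
  by simp

lemma sum_if_count: "finite A \<Longrightarrow> (\<Sum>t\<in>A. if P t then c else 0) = of_nat (card {t\<in>A. P t}) * c"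
  by (simp add: sum.inter_filter[symmetric])

lemma frame1:
  fixes \<omega> :: "'a::field" and v :: "nat \<Rightarrow> 'a"
  assumes ds: "cyclic_diff_set d k D" and d0: "d > 0" and q0: "q > 0" and dq: "d dvd q + 1"
    and wd: "\<omega> ^ d = 1" and word: "\<forall>m. \<omega> ^ m = 1 \<longrightarrow> d dvd m" and v: "v \<in> vecs {..<d}"
  shows "(\<Sum>s<d. \<Sum>t<d. herm q {..<d} (XX d \<omega> D s t) v * XX d \<omega> D s t j) = of_nat d * of_nat (card D) * v j"
proof (cases "j < d")
  case False
  then have "v j = 0" using v by (simp add: vecs_def)
  then show ?thesis using False by (simp add: XX_def)
next
  case True
  define F where "F s t i = (if gg d t j \<in> D \<and> i < d \<and> gg d t i \<in> D then v i * \<omega> ^ (s * (i * q + j)) else 0)" for s t i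
  have trm: "herm q {..<d} (XX d \<omega> D s t) v * XX d \<omega> D s t j = (\<Sum>i<d. F s t i)" for s t
  proof -
    have "herm q {..<d} (XX d \<omega> D s t) v * XX d \<omega> D s t j = (\<Sum>i<d. cnj q (XX d \<omega> D s t i) * v i * XX d \<omega> D s t j)"
      by (simp add: herm_def sum_distrib_right)
    also have "\<dots> = (\<Sum>i<d. F s t i)"
    proof (rule sum.cong[OF refl])
      fix i assume "i \<in> {..<d}"
      have pw: "\<omega> ^ (s * (i * q + j)) = \<omega> ^ (s * i * q) * \<omega> ^ (s * j)"
        by (simp add: distrib_left power_add mult.assoc)
      show "cnj q (XX d \<omega> D s t i) * v i * XX d \<omega> D s t j = F s t i"
        unfolding cnj_XX[OF q0] using True by (simp add: XX_def F_def pw)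
    qed
    finally show ?thesis .
  qed
  have inner: "(\<Sum>s<d. F s t i) = (if i = j then (if gg d t j \<in> D then v j * of_nat d else 0) else 0)"
    if i: "i < d" for t i
  proof -
    have "(\<Sum>s<d. F s t i) = (if gg d t j \<in> D \<and> i < d \<and> gg d t i \<in> D then v i * (\<Sum>s<d. \<omega> ^ (s * (i * q + j))) else 0)"
      by (simp only: F_def sum_if_const sum_distrib_left)
    also have "(\<Sum>s<d. \<omega> ^ (s * (i * q + j))) = (if i = j then of_nat d else 0)"
    proof -
      have "d dvd (i * q + j) \<longleftrightarrow> i = j"
        using exp_cong[OF dq, of i j] i True by simp
      then show ?thesis using orth[OF wd word, of "i * q + j"] by simp
    qed
    finally show ?thesis using i by auto
  qed
  have "(\<Sum>s<d. \<Sum>t<d. herm q {..<d} (XX d \<omega> D s t) v * XX d \<omega> D s t j) = (\<Sum>s<d. \<Sum>t<d. \<Sum>i<d. F s t i)"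
    by (simp add: trm)
  also have "\<dots> = (\<Sum>t<d. \<Sum>s<d. \<Sum>i<d. F s t i)" by (rule sum.swap)
  also have "\<dots> = (\<Sum>t<d. \<Sum>i<d. \<Sum>s<d. F s t i)" by (rule sum.cong[OF refl], rule sum.swap)
  also have "\<dots> = (\<Sum>t<d. \<Sum>i<d. (if i = j then (if gg d t j \<in> D then v j * of_nat d else 0) else 0))"
    by (rule sum.cong[OF refl], rule sum.cong[OF refl]) (simp add: inner)
  also have "\<dots> = (\<Sum>t<d. (if gg d t j \<in> D then v j * of_nat d else 0))"
    using True by (simp add: sum.delta')
  also have "\<dots> = of_nat (card {t\<in>{..<d}. gg d t j \<in> D}) * (v j * of_nat d)"
    by (rule sum_if_count) simp
  also have "\<dots> = of_nat d * of_nat (card D) * v j"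
    using count1[OF ds d0 True] by (simp add: algebra_simps)
  finally show ?thesis .
qed

lemma frame2:
  fixes \<omega> :: "'a::field" and V :: "nat \<times> nat \<Rightarrow> 'a"
  assumes ds: "cyclic_diff_set d k D" and d0: "d > 0" and q0: "q > 0" and dq: "d dvd q + 1"
    and wd: "\<omega> ^ d = 1" and word: "\<forall>m. \<omega> ^ m = 1 \<longrightarrow> d dvd m" and V: "V \<in> sym_tensors d"
  shows "(\<Sum>s<d. \<Sum>t<d. herm q ({..<d} \<times> {..<d}) (tensor2 (XX d \<omega> D s t)) V * tensor2 (XX d \<omega> D s t) (a, b))
     = (if a = b then of_nat (card D) else 2) * of_nat d * V (a, b)"
proof (cases "a < d \<and> b < d")
  case False
  then have "V (a, b) = 0" using V by (auto simp: vecs_def sym_tensors_def)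
  then show ?thesis using False by (auto simp: XX_def tensor2_def)
next
  case True
  then have a: "a < d" and b: "b < d" by auto
  let ?I = "{..<d} \<times> {..<d}"
  define EE where "EE t ij = (fst ij < d \<and> gg d t (fst ij) \<in> D \<and> snd ij < d \<and> gg d t (snd ij) \<in> D \<and> gg d t a \<in> D \<and> gg d t b \<in> D)" for t ij
  define F where "F s t ij = (if EE t ij then V ij * \<omega> ^ (s * ((fst ij + snd ij) * q + (a + b))) else 0)" for s t ij
  have trm: "herm q ?I (tensor2 (XX d \<omega> D s t)) V * tensor2 (XX d \<omega> D s t) (a, b) = (\<Sum>ij\<in>?I. F s t ij)" for s t
  proof -
    have "herm q ?I (tensor2 (XX d \<omega> D s t)) V * tensor2 (XX d \<omega> D s t) (a, b)
        = (\<Sum>ij\<in>?I. cnj q (tensor2 (XX d \<omega> D s t) ij) * V ij * tensor2 (XX d \<omega> D s t) (a, b))"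
      by (simp add: herm_def sum_distrib_right)
    also have "\<dots> = (\<Sum>ij\<in>?I. F s t ij)"
    proof (rule sum.cong[OF refl])
      fix ij assume "ij \<in> ?I"
      obtain i j where ij: "ij = (i, j)" by fastforce
      have pw: "\<omega> ^ (s * ((i + j) * q + (a + b))) = \<omega> ^ (s * i * q) * \<omega> ^ (s * j * q) * (\<omega> ^ (s * a) * \<omega> ^ (s * b))"
      proof -
        have "s * ((i + j) * q + (a + b)) = s * i * q + s * j * q + (s * a + s * b)" by (simp add: algebra_simps)
        then show ?thesis by (simp only: power_add)
      qed
      have cm: "cnj q (x * y) = cnj q x * cnj q y" for x y :: 'a by (simp add: cnj_def power_mult_distrib)
      show "cnj q (tensor2 (XX d \<omega> D s t) ij) * V ij * tensor2 (XX d \<omega> D s t) (a, b) = F s t ij"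
        unfolding ij tensor2_def split cm cnj_XX[OF q0] using True
        by (simp add: XX_def F_def EE_def pw)
    qed
    finally show ?thesis .
  qed
  have inner: "(\<Sum>s<d. F s t ij) = (if EE t ij \<and> (fst ij + snd ij) mod d = (a + b) mod d then V ij * of_nat d else 0)" for t ij
  proof -
    have "(\<Sum>s<d. F s t ij) = (if EE t ij then V ij * (\<Sum>s<d. \<omega> ^ (s * ((fst ij + snd ij) * q + (a + b)))) else 0)"
      by (simp only: F_def sum_if_const sum_distrib_left)
    also have "(\<Sum>s<d. \<omega> ^ (s * ((fst ij + snd ij) * q + (a + b)))) = (if (fst ij + snd ij) mod d = (a + b) mod d then of_nat d else 0)"
      using orth[OF wd word, of "(fst ij + snd ij) * q + (a + b)"] exp_cong[OF dq, of "fst ij + snd ij" "a + b"] by simp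
    finally show ?thesis by auto
  qed
  define W where "W = (if a = b then V (a, b) else 2 * V (a, b)) * of_nat d"
  have tsum: "(\<Sum>ij\<in>?I. if EE t ij \<and> (fst ij + snd ij) mod d = (a + b) mod d then V ij * of_nat d else 0)
      = (if gg d t a \<in> D \<and> gg d t b \<in> D then W else 0)" for t
  proof (cases "gg d t a \<in> D \<and> gg d t b \<in> D")
    case False
    then have "\<forall>ij. \<not> EE t ij" by (auto simp: EE_def)
    then have "(\<Sum>ij\<in>?I. if EE t ij \<and> (fst ij + snd ij) mod d = (a + b) mod d then V ij * of_nat d else 0) = 0"
      by (intro sum.neutral) simp
    then show ?thesis using False by auto
  next
    case tc: True
    let ?S = "{(a, b), (b, a)}"
    have "(\<Sum>ij\<in>?I. if EE t ij \<and> (fst ij + snd ij) mod d = (a + b) mod d then V ij * of_nat d else 0)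
        = (\<Sum>ij\<in>?I. if ij \<in> ?S then V ij * of_nat d else 0)"
    proof (rule sum.cong[OF refl])
      fix ij assume ijI: "ij \<in> ?I"
      obtain i j where ij: "ij = (i, j)" by fastforce
      have "(EE t ij \<and> (fst ij + snd ij) mod d = (a + b) mod d) \<longleftrightarrow> ij \<in> ?S"
      proof
        assume h: "EE t ij \<and> (fst ij + snd ij) mod d = (a + b) mod d"
        then have "(i = a \<and> j = b) \<or> (i = b \<and> j = a)"
          using quadT[OF ds d0, of i j a b t] a b unfolding EE_def ij by auto
        then show "ij \<in> ?S" using ij by auto
      next
        assume "ij \<in> ?S"
        then show "EE t ij \<and> (fst ij + snd ij) mod d = (a + b) mod d"
          using tc a b by (auto simp: EE_def add.commute)
      qed
      then show "(if EE t ij \<and> (fst ij + snd ij) mod d = (a + b) mod d then V ij * of_nat d else 0)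
          = (if ij \<in> ?S then V ij * of_nat d else 0)" by simp
    qed
    also have "\<dots> = (\<Sum>ij\<in>?I \<inter> ?S. V ij * of_nat d)"
      by (rule sum.inter_restrict[symmetric]) simp
    also have "?I \<inter> ?S = ?S" using a b by auto
    also have "(\<Sum>ij\<in>?S. V ij * of_nat d) = W"
    proof (cases "a = b")
      case True then show ?thesis by (simp add: W_def)
    next
      case False
      have "V (b, a) = V (a, b)" using V by (simp add: sym_tensors_def)
      then show ?thesis using False by (simp add: W_def algebra_simps)
    qed
    finally show ?thesis using tc by simp
  qed
  have "(\<Sum>s<d. \<Sum>t<d. herm q ?I (tensor2 (XX d \<omega> D s t)) V * tensor2 (XX d \<omega> D s t) (a, b))
      = (\<Sum>s<d. \<Sum>t<d. \<Sum>ij\<in>?I. F s t ij)" by (simp add: trm)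
  also have "\<dots> = (\<Sum>t<d. \<Sum>s<d. \<Sum>ij\<in>?I. F s t ij)" by (rule sum.swap)
  also have "\<dots> = (\<Sum>t<d. \<Sum>ij\<in>?I. \<Sum>s<d. F s t ij)" by (rule sum.cong[OF refl], rule sum.swap)
  also have "\<dots> = (\<Sum>t<d. (if gg d t a \<in> D \<and> gg d t b \<in> D then W else 0))"
    by (simp only: inner tsum)
  also have "\<dots> = of_nat (card {t\<in>{..<d}. gg d t a \<in> D \<and> gg d t b \<in> D}) * W"
    by (rule sum_if_count) simp
  also have "\<dots> = (if a = b then of_nat (card D) else 2) * of_nat d * V (a, b)"
  proof (cases "a = b")
    case True
    then show ?thesis using count1[OF ds d0 a] by (simp add: W_def)
  next
    case False
    then show ?thesis using count2[OF ds d0 a b False] by (simp add: W_def)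
  qed
  finally show ?thesis .
qed

lemma count0:
  assumes ds: "cyclic_diff_set d k D" and d0: "d > 0"
  shows "card {i\<in>{..<d}. gg d t i \<in> D} = card D"
proof -
  have Dsub: "D \<subseteq> {..<d}" using ds by (simp add: cyclic_diff_set_def)
  have inj0: "inj_on (gg d t) {..<d}" using g_inj_i[OF d0] by (auto simp: inj_on_def)
  have sub: "gg d t ` {..<d} \<subseteq> {..<d}" using g_less[OF d0] by auto
  have "card (gg d t ` {..<d}) = card {..<d}" using card_image[OF inj0] by simp
  then have surj: "gg d t ` {..<d} = {..<d}" using card_subset_eq[OF _ sub] by simp
  have inj: "inj_on (gg d t) {i\<in>{..<d}. gg d t i \<in> D}" using inj0 by (auto simp: inj_on_def)
  have "gg d t ` {i\<in>{..<d}. gg d t i \<in> D} = D"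
  proof
    show "gg d t ` {i\<in>{..<d}. gg d t i \<in> D} \<subseteq> D" by auto
    show "D \<subseteq> gg d t ` {i\<in>{..<d}. gg d t i \<in> D}"
    proof
      fix y assume y: "y \<in> D"
      then have "y \<in> gg d t ` {..<d}" using surj Dsub by auto
      then show "y \<in> gg d t ` {i\<in>{..<d}. gg d t i \<in> D}" using y by auto
    qed
  qed
  then show ?thesis using card_image[OF inj] by simp
qed

lemma tf_intro:
  fixes c :: "'a::field"
  assumes mem: "\<forall>j\<in>J. y j \<in> V"
    and fr: "\<forall>v\<in>V. (\<lambda>i. \<Sum>j\<in>J. herm q I (y j) v * y j i) = (\<lambda>i. c * v i)"
    and c0: "c \<noteq> 0"
  shows "tight_frame q I V J y c"
  unfolding tight_frame_def
proof (intro conjI ballI)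
  fix j assume "j \<in> J" then show "y j \<in> V" using mem by blast
next
  fix v assume v: "v \<in> V"
  show "\<exists>co. v = (\<lambda>i. \<Sum>j\<in>J. co j * y j i)"
  proof (intro exI ext)
    fix i
    have "(\<lambda>i. \<Sum>j\<in>J. herm q I (y j) v * y j i) i = (\<lambda>i. c * v i) i" using fr v by metis
    then have e: "(\<Sum>j\<in>J. herm q I (y j) v * y j i) = c * v i" by simp
    have "(\<Sum>j\<in>J. herm q I (y j) v / c * y j i) = (\<Sum>j\<in>J. herm q I (y j) v * y j i) / c"
      by (simp add: sum_divide_distrib)
    also have "\<dots> = v i" using e c0 by simp
    finally show "v i = (\<Sum>j\<in>J. herm q I (y j) v / c * y j i)" by simp
  qed
next
  fix v assume "v \<in> V" then show "(\<lambda>i. \<Sum>j\<in>J. herm q I (y j) v * y j i) = (\<lambda>i. c * v i)" using fr by blast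
qed

lemma sum_prod_split: "(\<Sum>k\<in>A \<times> B. f k) = (\<Sum>s\<in>A. \<Sum>t\<in>B. f (s, t))"
  by (simp add: sum.cartesian_product)

lemma nat_sq_minus1: "(q::nat) \<ge> 1 \<Longrightarrow> q ^ 2 - 1 = (q + 1) * (q - 1)"
  by (cases q) (auto simp: power2_eq_square algebra_simps)

theorem mainTheorem12:
  fixes p k r q d :: nat and D :: "nat set" and \<alpha> \<omega> :: "'a::{field,finite}"
  assumes "prime p" and "k \<ge> 1" and "p > 3"
    and "prime_power r" and "p dvd r - 1" and "(r^2 + r + 1) dvd (p^k + 1)"
    and "q = p ^ k" and "d = r^2 + r + 1"
    and "card (UNIV :: 'a set) = q^2"
    and "cyclic_diff_set d (r + 1) D"
    and "\<alpha> \<noteq> 0" and "\<forall>x::'a. x \<noteq> 0 \<longrightarrow> (\<exists>n. x = \<alpha> ^ n)"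
    and "\<omega> = \<alpha> ^ ((q^2 - 1) div d)"
  shows "proj_2design q d ({..<d} \<times> {..<d})
           (\<lambda>(s, t). (modul d \<omega> ^^ s) ((transl d ^^ t) (indic D)))
           2 (of_nat (2 * d)) 6"
proof -
  note pp = assms(1) and k1 = assms(2) and p3 = assms(3) and rpp = assms(4) and prd = assms(5)
    and ddv = assms(6) and qdef = assms(7) and ddef = assms(8) and cardU = assms(9) and ds = assms(10)
    and a0 = assms(11) and agen = assms(12) and wdef = assms(13)
  have p2: "p \<ge> 2" using pp prime_ge_2_nat by blast
  have q2: "q \<ge> 2"
  proof -
    have "p ^ 1 \<le> p ^ k" using k1 p2 by (intro power_increasing) auto
    then show ?thesis using qdef p2 by simp
  qed
  have r2: "r \<ge> 2"
  proof -
    obtain l m where l: "prime (l::nat)" "m \<ge> 1" "r = l ^ m" using rpp unfolding prime_power_def by blast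
    have l2: "l \<ge> 2" using l(1) prime_ge_2_nat by blast
    have "l ^ 1 \<le> l ^ m" using l(2) l2 by (intro power_increasing) auto
    then show ?thesis using l(3) l2 by simp
  qed
  have d0: "d > 0" using ddef by simp
  have q0: "q > 0" using q2 by simp
  have dq: "d dvd q + 1" using ddv qdef ddef by simp
  define N where "N = q ^ 2 - 1"
  have Ncard: "card (UNIV::'a set) - 1 = N" using cardU N_def by simp
  have eqN: "q ^ 2 - 1 = (q + 1) * (q - 1)" using q0 by (intro nat_sq_minus1) simp
  have dN: "d dvd N" unfolding N_def eqN by (rule dvd_mult2[OF dq])
  define e where "e = N div d"
  have Ne: "N = e * d" using dN by (simp add: e_def)
  have Npos: "N > 0"
  proof -
    have "q ^ 2 \<ge> 2 ^ 2" using q2 by (intro power_mono) auto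
    then show ?thesis by (simp add: N_def)
  qed
  have e0: "e > 0" using Npos Ne by (cases e) auto
  have we: "\<omega> = \<alpha> ^ e" using wdef by (simp add: e_def N_def)
  have wd: "\<omega> ^ d = 1"
  proof -
    have "\<omega> ^ d = \<alpha> ^ N" by (simp add: we Ne power_mult)
    also have "\<dots> = 1" using pow_card_minus_one[OF a0] Ncard by simp
    finally show ?thesis .
  qed
  have word: "\<forall>m. \<omega> ^ m = 1 \<longrightarrow> d dvd m"
  proof (intro allI impI)
    fix m assume "\<omega> ^ m = 1"
    then have "\<alpha> ^ (e * m) = 1" by (simp add: we power_mult)
    then have "N dvd e * m" using gen_order[OF a0 agen] Ncard by metis
    then have "e * d dvd e * m" using Ne by (simp add: mult.commute)
    then show "d dvd m" using e0 by simp
  qed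
  have Dsub: "D \<subseteq> {..<d}" using ds unfolding cyclic_diff_set_def by (rule conjunct1)
  have cardD: "card D = r + 1" using ds unfolding cyclic_diff_set_def by (rule conjunct1[OF conjunct2])
  have charp: "(of_nat p :: 'a) = 0"
  proof -
    have c1: "card (UNIV::'a set) = p ^ (k * 2)" by (simp only: cardU qdef power_mult)
    have "(of_nat p :: 'a) ^ (k * 2) = of_nat (p ^ (k * 2))" by (rule of_nat_power[symmetric])
    also have "\<dots> = 0" using of_nat_card_zero[where 'a='a] c1 by simp
    finally show ?thesis by simp
  qed
  have ofr: "(of_nat r :: 'a) = 1"
  proof -
    obtain c where c: "r - 1 = p * c" using prd by blast
    have "r = p * c + 1" using c r2 by simp
    then show ?thesis using charp by simp
  qed
  have ofD: "(of_nat (card D) :: 'a) = 2" using cardD ofr by simp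
  have ofd: "(of_nat d :: 'a) = 3" using ddef ofr by (simp add: power2_eq_square)
  have two: "(2::'a) \<noteq> 0"
  proof
    assume h: "(2::'a) = 0"
    have "\<not> 2 dvd p"
    proof
      assume h2: "2 dvd p"
      have "\<forall>m. m dvd p \<longrightarrow> m = 1 \<or> m = p" using pp unfolding prime_nat_iff by blast
      then have "(2::nat) = 1 \<or> 2 = p" using h2 by blast
      then have "2 = p" by simp
      then show False using p3 by simp
    qed
    then have "p = 2 * (p div 2) + 1" by presburger
    then have "(of_nat p :: 'a) = of_nat 2 * of_nat (p div 2) + 1" by (metis of_nat_add of_nat_mult of_nat_1)
    then show False using h charp by simp
  qed
  have three: "(3::'a) \<noteq> 0"
  proof
    assume h: "(3::'a) = 0"
    have "\<not> 3 dvd p"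
    proof
      assume h3: "3 dvd p"
      have "\<forall>m. m dvd p \<longrightarrow> m = 1 \<or> m = p" using pp unfolding prime_nat_iff by blast
      then have "(3::nat) = 1 \<or> 3 = p" using h3 by blast
      then have "3 = p" by simp
      then show False using p3 by simp
    qed
    then have "p mod 3 = 1 \<or> p mod 3 = 2" by presburger
    moreover have "p = 3 * (p div 3) + p mod 3" by simp
    then have "(of_nat p :: 'a) = of_nat 3 * of_nat (p div 3) + of_nat (p mod 3)" by (metis of_nat_add of_nat_mult)
    ultimately show False using h charp two by auto
  qed
  have six: "(6::'a) \<noteq> 0"
  proof -
    have "(6::'a) = 2 * 3" by simp
    moreover have "(2::'a) * 3 \<noteq> 0" using two three by (simp only: mult_eq_0_iff de_Morgan_disj) simp
    ultimately show ?thesis by simp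
  qed
  have Yeq: "(\<lambda>(s, t). (modul d \<omega> ^^ s) ((transl d ^^ t) (indic D))) = (\<lambda>k. XX d \<omega> D (fst k) (snd k))"
    using vec_eq[OF d0 Dsub] by (auto simp: fun_eq_iff)
  show ?thesis
    unfolding proj_2design_def Yeq
  proof (intro conjI)
    show "\<forall>k\<in>{..<d} \<times> {..<d}. herm q {..<d} (XX d \<omega> D (fst k) (snd k)) (XX d \<omega> D (fst k) (snd k)) = 2"
    proof
      fix kk assume "kk \<in> {..<d} \<times> {..<d}"
      obtain s t where st: "kk = (s, t)" by fastforce
      have one: "\<omega> ^ (s * i * q) * \<omega> ^ (s * i) = 1" for i
      proof -
        obtain c where c: "q + 1 = d * c" using dq by blast
        have ex: "s * i * q + s * i = d * (c * (s * i))"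
        proof -
          have "s * i * q + s * i = s * i * (q + 1)" by (simp add: algebra_simps)
          also have "\<dots> = s * i * (d * c)" by (simp only: c)
          finally show ?thesis by (simp add: ac_simps)
        qed
        have "\<omega> ^ (s * i * q) * \<omega> ^ (s * i) = \<omega> ^ (s * i * q + s * i)" by (simp only: power_add)
        also have "\<dots> = (\<omega> ^ d) ^ (c * (s * i))" by (simp only: ex power_mult)
        finally show ?thesis by (simp add: wd)
      qed
      have "herm q {..<d} (XX d \<omega> D s t) (XX d \<omega> D s t) = (\<Sum>i<d. if gg d t i \<in> D then 1 else 0)"
        unfolding herm_def cnj_XX[OF q0] by (rule sum.cong[OF refl]) (auto simp: XX_def one)
      also have "\<dots> = of_nat (card {i\<in>{..<d}. gg d t i \<in> D}) * 1" by (rule sum_if_count) simp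
      also have "\<dots> = 2" using count0[OF ds d0] ofD by simp
      finally show "herm q {..<d} (XX d \<omega> D (fst kk) (snd kk)) (XX d \<omega> D (fst kk) (snd kk)) = 2" by (simp add: st)
    qed
  next
    show "tight_frame q {..<d} (vecs {..<d}) ({..<d} \<times> {..<d}) (\<lambda>k. XX d \<omega> D (fst k) (snd k)) (of_nat (2 * d))"
    proof (rule tf_intro)
      show "\<forall>j\<in>{..<d} \<times> {..<d}. XX d \<omega> D (fst j) (snd j) \<in> vecs {..<d}"
        by (auto simp: vecs_def XX_def)
      show "(of_nat (2 * d) :: 'a) \<noteq> 0" using ofd six by simp
      show "\<forall>v\<in>vecs {..<d}. (\<lambda>i. \<Sum>j\<in>{..<d} \<times> {..<d}. herm q {..<d} (XX d \<omega> D (fst j) (snd j)) v * XX d \<omega> D (fst j) (snd j) i) = (\<lambda>i. of_nat (2 * d) * v i)"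
      proof (intro ballI ext)
        fix v :: "nat \<Rightarrow> 'a" and i assume v: "v \<in> vecs {..<d}"
        have "(\<Sum>j\<in>{..<d} \<times> {..<d}. herm q {..<d} (XX d \<omega> D (fst j) (snd j)) v * XX d \<omega> D (fst j) (snd j) i)
            = (\<Sum>s<d. \<Sum>t<d. herm q {..<d} (XX d \<omega> D s t) v * XX d \<omega> D s t i)"
          by (simp add: sum_prod_split)
        also have "\<dots> = of_nat d * of_nat (card D) * v i" by (rule frame1[OF ds d0 q0 dq wd word v])
        also have "\<dots> = of_nat (2 * d) * v i" using ofd ofD by simp
        finally show "(\<Sum>j\<in>{..<d} \<times> {..<d}. herm q {..<d} (XX d \<omega> D (fst j) (snd j)) v * XX d \<omega> D (fst j) (snd j) i) = of_nat (2 * d) * v i" .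
      qed
    qed
  next
    show "tight_frame q ({..<d} \<times> {..<d}) (sym_tensors d) ({..<d} \<times> {..<d}) (\<lambda>k. tensor2 (XX d \<omega> D (fst k) (snd k))) 6"
    proof (rule tf_intro)
      show "\<forall>j\<in>{..<d} \<times> {..<d}. tensor2 (XX d \<omega> D (fst j) (snd j)) \<in> sym_tensors d"
        by (auto simp: sym_tensors_def vecs_def XX_def tensor2_def)
      show "(6::'a) \<noteq> 0" by (rule six)
      show "\<forall>V\<in>sym_tensors d. (\<lambda>ab. \<Sum>j\<in>{..<d} \<times> {..<d}. herm q ({..<d} \<times> {..<d}) (tensor2 (XX d \<omega> D (fst j) (snd j))) V * tensor2 (XX d \<omega> D (fst j) (snd j)) ab) = (\<lambda>ab. 6 * V ab)"
      proof (intro ballI ext)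
        fix V :: "nat \<times> nat \<Rightarrow> 'a" and ab :: "nat \<times> nat" assume V: "V \<in> sym_tensors d"
        obtain a b where ab: "ab = (a, b)" by fastforce
        have "(\<Sum>j\<in>{..<d} \<times> {..<d}. herm q ({..<d} \<times> {..<d}) (tensor2 (XX d \<omega> D (fst j) (snd j))) V * tensor2 (XX d \<omega> D (fst j) (snd j)) ab)
            = (\<Sum>s<d. \<Sum>t<d. herm q ({..<d} \<times> {..<d}) (tensor2 (XX d \<omega> D s t)) V * tensor2 (XX d \<omega> D s t) (a, b))"
          by (simp add: sum_prod_split ab)
        also have "\<dots> = (if a = b then of_nat (card D) else 2) * of_nat d * V (a, b)"
          by (rule frame2[OF ds d0 q0 dq wd word V])
        also have "\<dots> = 6 * V ab" using ofd ofD ab by simp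
        finally show "(\<Sum>j\<in>{..<d} \<times> {..<d}. herm q ({..<d} \<times> {..<d}) (tensor2 (XX d \<omega> D (fst j) (snd j))) V * tensor2 (XX d \<omega> D (fst j) (snd j)) ab) = 6 * V ab" .
      qed
    qed
  qed
qed

end
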